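(* Let $\mathcal{T}$ be an $l$-eligible microdata table and run the algorithm described in the context (arbitrary tie-breaking). If the algorithm terminates during Phase Two, then $|\ddot{R}| \le l\cdot h(\dot{R}) + l - 1$, where $\dot{R}$ is $R$ at the end of Phase One and $\ddot{R}$ is $R$ at termination.
   Context: A microdata table $\mathcal{T}$ is a multiset of $n$ tuples with values on $d$ quasi-identifier (QI) attributes and one sensitive attribute (SA). For a multiset $Q$ and SA value $v$, $h(Q,v)$ is the number of tuples in $Q$ with SA value $v$, $h(Q)=\max_v h(Q,v)$, pillars of $Q$ are the $v$ with $h(Q,v)=h(Q)$; $Q$ is $l$-eligible if $|Q|\ge l\cdot h(Q)$. Let $Q_1,\dots,Q_s$ be the maximal classes of tuples of $\mathcal{T}$ with identical values on all QI attributes; the algorithm only moves tuples from these groups into a set $R$ (initially empty). Phase One: for each $i$, while $Q_i$ is not $l$-eligible, move a tuple of a pillar of $Q_i$ to $R$; call the result $\dot{Q}_i,\dot{R}$; if $R$ is $l$-eligible, terminate. Phase Two terminology (w.r.t. current state): a group $Q$ is thin if $|Q|=l\cdot h(Q)$ and fat if $|Q|\ge l\cdot h(Q)+1$; $Q$ is conflicting if some pillar of $Q$ is a pillar of $R$; $Q$ is dead if thin and conflicting, alive otherwise; an SA value $v$ is alive if some alive group $Q$ has $h(Q,v)>0$. Phase Two iterates: if no SA value is alive, Phase Two ends (go to Phase Three). Otherwise pick an alive SA value $v$ minimizing $h(R,v)$ and an alive group $Q$ with $h(Q,v)>0$ (ties arbitrary); if $Q$ is fat move one tuple with SA value $v$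 from $Q$ to $R$; if $Q$ is thin move one tuple of each pillar of $Q$ to $R$. If $R$ is now $l$-eligible, the algorithm terminates. *)

theory Defs
  imports Main "HOL-Library.Multiset"
begin

text \<open>A tuple is a pair (QI-vector, SA value); a table is a multiset of tuples.\<close>

definition hv :: "('q \<times> 'v) multiset \<Rightarrow> 'v \<Rightarrow> nat" where
  "hv Q v = size (filter_mset (\<lambda>t. snd t = v) Q)"

definition hmax :: "('q \<times> 'v) multiset \<Rightarrow> nat" where
  "hmax Q = Max (insert 0 ((\<lambda>v. hv Q v) ` (snd ` set_mset Q)))"

definition pillar :: "('q \<times> 'v) multiset \<Rightarrow> 'v \<Rightarrow> bool" where
  "pillar Q v \<longleftrightarrow> hv Q v = hmax Q"

definition eligible :: "nat \<Rightarrow> ('q \<times> 'v) multiset \<Rightarrow> bool" where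
  "eligible l Q \<longleftrightarrow> size Q \<ge> l * hmax Q"

definition QIs :: "('q \<times> 'v) multiset \<Rightarrow> 'q set" where
  "QIs T = fst ` set_mset T"

definition grp :: "('q \<times> 'v) multiset \<Rightarrow> 'q \<Rightarrow> ('q \<times> 'v) multiset" where
  "grp G q = filter_mset (\<lambda>t. fst t = q) G"

definition thin :: "nat \<Rightarrow> ('q \<times> 'v) multiset \<Rightarrow> bool" where
  "thin l Q \<longleftrightarrow> size Q = l * hmax Q"

definition fat :: "nat \<Rightarrow> ('q \<times> 'v) multiset \<Rightarrow> bool" where
  "fat l Q \<longleftrightarrow> size Q \<ge> l * hmax Q + 1"

definition conflicting :: "('q \<times> 'v) multiset \<Rightarrow> ('q \<times> 'v) multiset \<Rightarrow> bool" where
  "conflicting Q R \<longleftrightarrow> (\<exists>v. pillar Q v \<and> pillar R v)"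

definition dead :: "nat \<Rightarrow> ('q \<times> 'v) multiset \<Rightarrow> ('q \<times> 'v) multiset \<Rightarrow> bool" where
  "dead l Q R \<longleftrightarrow> thin l Q \<and> conflicting Q R"

definition alive_grp :: "nat \<Rightarrow> ('q \<times> 'v) multiset \<Rightarrow> ('q \<times> 'v) multiset \<Rightarrow> bool" where
  "alive_grp l Q R \<longleftrightarrow> \<not> dead l Q R"

definition alive_val :: "nat \<Rightarrow> ('q \<times> 'v) multiset \<Rightarrow> ('q \<times> 'v) multiset \<Rightarrow> ('q \<times> 'v) multiset \<Rightarrow> 'v \<Rightarrow> bool" where
  "alive_val l T G R v \<longleftrightarrow> (\<exists>q\<in>QIs T. alive_grp l (grp G q) R \<and> hv (grp G q) v > 0)"

definition phase1_step :: "nat \<Rightarrow> ('q \<times> 'v) multiset \<Rightarrow>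
    (('q \<times> 'v) multiset \<times> ('q \<times> 'v) multiset) \<Rightarrow> (('q \<times> 'v) multiset \<times> ('q \<times> 'v) multiset) \<Rightarrow> bool" where
  "phase1_step l T s s' \<longleftrightarrow> (case s of (G, R) \<Rightarrow>
     (\<exists>q v. q \<in> QIs T \<and> \<not> eligible l (grp G q) \<and> pillar (grp G q) v \<and> hv (grp G q) v > 0 \<and>
        s' = (G - {#(q, v)#}, R + {#(q, v)#})))"

definition phase1_done :: "nat \<Rightarrow> ('q \<times> 'v) multiset \<Rightarrow> ('q \<times> 'v) multiset \<Rightarrow> bool" where
  "phase1_done l T G \<longleftrightarrow> (\<forall>q\<in>QIs T. eligible l (grp G q))"

definition phase2_step :: "nat \<Rightarrow> ('q \<times> 'v) multiset \<Rightarrow>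
    (('q \<times> 'v) multiset \<times> ('q \<times> 'v) multiset) \<Rightarrow> (('q \<times> 'v) multiset \<times> ('q \<times> 'v) multiset) \<Rightarrow> bool" where
  "phase2_step l T s s' \<longleftrightarrow> (case s of (G, R) \<Rightarrow>
     \<not> eligible l R \<and>
     (\<exists>v q. alive_val l T G R v \<and> (\<forall>u. alive_val l T G R u \<longrightarrow> hv R v \<le> hv R u) \<and>
        q \<in> QIs T \<and> alive_grp l (grp G q) R \<and> hv (grp G q) v > 0 \<and>
        ((fat l (grp G q) \<and> s' = (G - {#(q, v)#}, R + {#(q, v)#})) \<or>
         (thin l (grp G q) \<and>
           (let M = image_mset (\<lambda>p. (q, p)) (mset_set {p. pillar (grp G q) p})
            in s' = (G - M, R + M))))))"

end

theory Submission
  imports Defs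
begin

lemma hv_count: "hv Q v = count (image_mset snd Q) v"
  unfolding hv_def by (induction Q) auto

lemma hmax_eq: "hmax Q = Max (insert 0 (count (image_mset snd Q) ` set_mset (image_mset snd Q)))"
  by (simp add: hmax_def hv_count)

lemma hv_le_hmax: "hv Q v \<le> hmax Q"
proof (cases "v \<in># image_mset snd Q")
  case True
  then show ?thesis unfolding hmax_eq hv_count by (intro Max_ge) auto
next
  case False
  then have "count (image_mset snd Q) v = 0" by (simp add: not_in_iff[symmetric])
  then show ?thesis unfolding hv_count by simp
qed

lemma hmax_le: "(\<And>v. hv Q v \<le> K) \<Longrightarrow> hmax Q \<le> K"
  unfolding hmax_eq hv_count by (subst Max_le_iff) auto

lemma size_eq_sum: "size Q = (\<Sum>u\<in>snd ` set_mset Q. hv Q u)"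
proof -
  have "size Q = size (image_mset snd Q)" by simp
  also have "\<dots> = (\<Sum>u\<in>set_mset (image_mset snd Q). count (image_mset snd Q) u)"
    by (rule size_multiset_overloaded_eq)
  finally show ?thesis by (simp add: hv_count)
qed

lemma sum_hv_le: assumes "finite S" shows "(\<Sum>u\<in>S. hv Q u) \<le> size Q"
proof -
  have "(\<Sum>u\<in>S. hv Q u) \<le> (\<Sum>u\<in>S \<union> snd ` set_mset Q. hv Q u)"
    by (rule sum_mono2) (use assms in auto)
  also have "\<dots> = (\<Sum>u\<in>snd ` set_mset Q. hv Q u)"
    by (rule sum.mono_neutral_right) (use assms in \<open>auto simp: hv_count count_eq_zero_iff\<close>)
  finally show ?thesis using size_eq_sum by metis
qed

lemma hv_add: "hv (A + B) u = hv A u + hv B u"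
  by (simp add: hv_count)

lemma hv_single: "hv {#(q, v)#} u = (if u = v then 1 else 0)"
  by (simp add: hv_count)

lemma hv_img: assumes "finite P"
  shows "hv (image_mset (\<lambda>p. (q, p)) (mset_set P)) u = (if u \<in> P then 1 else 0)"
proof -
  have "image_mset snd (image_mset (\<lambda>p. (q, p)) (mset_set P)) = mset_set P"
    by (simp add: multiset.map_comp o_def)
  then show ?thesis using assms by (simp add: hv_count count_mset_set)
qed

lemma step_bound:
  assumes "phase2_step l T (G, R) (G', R')"
  shows "hmax R' \<le> hmax R \<and> size R' \<le> size R + l \<and> size R < l * hmax R"
proof -
  from assms have ne: "\<not> eligible l R" and
    "\<exists>v q. alive_val l T G R v \<and> (\<forall>u. alive_val l T G R u \<longrightarrow> hv R v \<le> hv R u) \<and>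
        q \<in> QIs T \<and> alive_grp l (grp G q) R \<and> hv (grp G q) v > 0 \<and>
        ((fat l (grp G q) \<and> (G', R') = (G - {#(q, v)#}, R + {#(q, v)#})) \<or>
         (thin l (grp G q) \<and>
           (let M = image_mset (\<lambda>p. (q, p)) (mset_set {p. pillar (grp G q) p})
            in (G', R') = (G - M, R + M))))"
    unfolding phase2_step_def by auto
  then obtain v q where minv: "\<forall>u. alive_val l T G R u \<longrightarrow> hv R v \<le> hv R u"
    and qT: "q \<in> QIs T" and al: "alive_grp l (grp G q) R" and pos: "hv (grp G q) v > 0"
    and cases: "(fat l (grp G q) \<and> (G', R') = (G - {#(q, v)#}, R + {#(q, v)#})) \<or>
         (thin l (grp G q) \<and>
           (let M = image_mset (\<lambda>p. (q, p)) (mset_set {p. pillar (grp G q) p})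
            in (G', R') = (G - M, R + M)))" by blast
  define Q where "Q = grp G q"
  define S where "S = snd ` set_mset Q"
  have finS: "finite S" unfolding S_def by simp
  have ltR: "size R < l * hmax R" using ne unfolding eligible_def by simp
  have hQpos: "hmax Q > 0" using pos hv_le_hmax[of Q v] unfolding Q_def by simp
  have sizeQ: "size Q = (\<Sum>u\<in>S. hv Q u)" unfolding S_def by (rule size_eq_sum)
  have inS: "hv Q u > 0 \<Longrightarrow> u \<in> S" for u
    unfolding S_def hv_count by (auto simp: not_in_iff[symmetric])
  have sumS: "(\<Sum>u\<in>S. hv Q u) \<le> card S * hmax Q"
    using sum_bounded_above[of S "hv Q" "hmax Q"] hv_le_hmax[of Q] by (simp add: mult.commute)
  show ?thesis
  proof (cases "fat l (grp G q) \<and> (G', R') = (G - {#(q, v)#}, R + {#(q, v)#})")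
    case True
    then have fat: "size Q \<ge> l * hmax Q + 1" and R': "R' = R + {#(q, v)#}"
      unfolding fat_def Q_def by auto
    have "\<exists>u\<in>S. hv R u < hmax R"
    proof (rule ccontr)
      assume "\<not> ?thesis"
      then have all: "\<forall>u\<in>S. hv R u \<ge> hmax R" by auto
      have "card S > l"
      proof (rule ccontr)
        assume "\<not> card S > l"
        then have "card S * hmax Q \<le> l * hmax Q" by simp
        then show False using fat sizeQ sumS by linarith
      qed
      have "l * hmax R \<le> card S * hmax R" using \<open>card S > l\<close> by simp
      also have "\<dots> \<le> (\<Sum>u\<in>S. hv R u)"
        using sum_bounded_below[of S "hmax R" "hv R"] all by auto
      also have "\<dots> \<le> size R" by (rule sum_hv_le[OF finS])
      finally show False using ltR by simp
    qed
    then obtain u where uS: "u \<in> S" and uR: "hv R u < hmax R" by blast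
    have "hv Q u > 0" using uS unfolding S_def hv_count by (auto simp: image_iff)
    then have "alive_val l T G R u" unfolding alive_val_def using qT al Q_def by blast
    then have vR: "hv R v < hmax R" using minv uR by fastforce
    have "hmax R' \<le> hmax R"
      apply (rule hmax_le)
      apply (simp only: R' hv_add hv_single)
      using vR hv_le_hmax[of R] by (auto simp: Suc_le_eq)
    moreover have "l > 0" using ltR by (cases l) auto
    ultimately show ?thesis using R' ltR by simp
  next
    case False
    define P where "P = {p. pillar Q p}"
    have thin: "thin l Q" and R': "R' = R + image_mset (\<lambda>p. (q, p)) (mset_set P)"
      using cases False unfolding Q_def P_def by (auto simp: Let_def)
    have nc: "\<not> conflicting Q R" using al thin
      unfolding alive_grp_def dead_def Q_def by auto
    have PS: "P \<subseteq> S"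
      using hQpos inS unfolding P_def pillar_def by auto
    have finP: "finite P" using PS finS finite_subset by blast
    have "card P * hmax Q = (\<Sum>p\<in>P. hv Q p)" unfolding P_def pillar_def by simp
    also have "\<dots> \<le> (\<Sum>u\<in>S. hv Q u)" by (rule sum_mono2[OF finS PS]) auto
    also have "\<dots> = l * hmax Q" using sizeQ thin unfolding thin_def by simp
    finally have "card P \<le> l" using hQpos by simp
    have PR: "p \<in> P \<Longrightarrow> hv R p < hmax R" for p
      using nc hv_le_hmax[of R p] unfolding P_def conflicting_def pillar_def
      by (auto simp: le_less)
    have "hmax R' \<le> hmax R"
      apply (rule hmax_le)
      apply (simp only: R' hv_add hv_img[OF finP])
      using PR hv_le_hmax by (auto simp: Suc_le_eq)
    moreover have "size R' = size R + card P" using R' finP by simp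
    ultimately show ?thesis using \<open>card P \<le> l\<close> ltR by simp
  qed
qed

lemma inv:
  assumes "(phase2_step l T)\<^sup>*\<^sup>* (G1, R1) (G2, R2)"
    and "size R1 < l * hmax R1"
  shows "hmax R2 \<le> hmax R1 \<and> size R2 \<le> l * hmax R1 + l - 1"
  using assms(1)
proof (induction "(G2, R2)" arbitrary: G2 R2 rule: rtranclp_induct)
  case base
  then show ?case using assms(2) by simp
next
  case (step y)
  obtain G R where y: "y = (G, R)" by (cases y)
  have IH: "hmax R \<le> hmax R1" using step.hyps(3) y by simp
  have "hmax R2 \<le> hmax R \<and> size R2 \<le> size R + l \<and> size R < l * hmax R"
    using step_bound step.hyps(2) y by blast
  moreover have "l * hmax R \<le> l * hmax R1" using IH by simp
  ultimately show ?case using IH by linarith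
qed

theorem lemma6:
  fixes T :: "('q \<times> 'v) multiset" and l :: nat
  assumes "eligible l T"
    and "(phase1_step l T)\<^sup>*\<^sup>* (T, {#}) (G1, R1)"
    and "phase1_done l T G1"
    and "\<not> eligible l R1"
    and "(phase2_step l T)\<^sup>*\<^sup>* (G1, R1) (G2, R2)"
    and "eligible l R2"
  shows "size R2 \<le> l * hmax R1 + l - 1"
  using inv[OF assms(5)] assms(4) unfolding eligible_def by simp

end
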